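(* Let $f:[0,1]\to[0,1]$ be a continuous map such that $f$ is increasing on $[0,1/2]$ and decreasing on $[1/2,1]$. Suppose $f$ has a periodic orbit of least period $\ge 2$. Then the periodic orbits of $f$ of least periods $\ge 2$ are nested in the following sense: if $P$ and $Q$ are periodic orbits of $f$ of least periods $\ge 2$ with $\max P<\max Q$, then $[\min P,\max P]\subset[\min Q,\max Q]$.
   Context: For $n\ge1$, $f^n$ denotes the $n$-th iterate of $f$. A point $x_0$ is a periodic point of least period $k$ if $f^k(x_0)=x_0$ and $f^i(x_0)\neq x_0$ for $0<i<k$; its orbit $\{x_0,f(x_0),f^2(x_0),\dots\}$ is then a periodic orbit of least period $k$. *)

theory Defs
  imports Complex_Main
begin

definition least_period :: "(real \<Rightarrow> real) \<Rightarrow> real \<Rightarrow> nat \<Rightarrow> bool" where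
  "least_period f x k \<longleftrightarrow> k \<ge> 1 \<and> (f ^^ k) x = x \<and> (\<forall>i. 0 < i \<and> i < k \<longrightarrow> (f ^^ i) x \<noteq> x)"

definition orbit :: "(real \<Rightarrow> real) \<Rightarrow> real \<Rightarrow> real set" where
  "orbit f x = {(f ^^ n) x | n. True}"

definition periodic_orbit :: "(real \<Rightarrow> real) \<Rightarrow> real set \<Rightarrow> nat \<Rightarrow> bool" where
  "periodic_orbit f P k \<longleftrightarrow> (\<exists>x \<in> {0..1}. least_period f x k \<and> P = orbit f x)"

end

theory Submission
  imports Defs
begin

lemma orbit_finite:
  assumes "(f ^^ k) x = x" "k \<ge> 1"
  shows "orbit f x = (\<lambda>n. (f ^^ n) x) ` {..<k}" "finite (orbit f x)"
proof -
  show *: "orbit f x = (\<lambda>n. (f ^^ n) x) ` {..<k}"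
    unfolding orbit_def
  proof (intro equalityI subsetI)
    fix y assume "y \<in> {(f ^^ n) x |n. True}"
    then obtain n where y: "y = (f ^^ n) x" by auto
    have "(f ^^ (n mod k)) x = (f ^^ n) x" using funpow_mod_eq assms(1) by metis
    moreover have "n mod k < k" using assms(2) by simp
    ultimately show "y \<in> (\<lambda>n. (f ^^ n) x) ` {..<k}" using y by (intro rev_image_eqI[of "n mod k"]) auto
  qed auto
  show "finite (orbit f x)" using * by simp
qed

lemma orbit_nonempty: "x \<in> orbit f x"
  unfolding orbit_def by (auto intro: exI[of _ 0])

lemma orbit_f: "y \<in> orbit f x \<Longrightarrow> f y \<in> orbit f x"
proof -
  assume "y \<in> orbit f x"
  then obtain n where "y = (f ^^ n) x" unfolding orbit_def by auto
  hence "f y = (f ^^ Suc n) x" by simp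
  thus ?thesis unfolding orbit_def by blast
qed

lemma orbit_pre:
  assumes "(f ^^ k) x = x" "k \<ge> 1" "y \<in> orbit f x"
  shows "\<exists>z \<in> orbit f x. f z = y"
proof -
  obtain n where y: "y = (f ^^ n) x" using assms(3) unfolding orbit_def by auto
  have "(f ^^ (n + k)) x = (f ^^ n) x"
    by (simp add: funpow_add assms(1))
  moreover have "n + k = Suc (n + k - 1)" using assms(2) by simp
  ultimately have "f ((f ^^ (n + k - 1)) x) = y" using y by (metis funpow.simps(2) o_apply)
  thus ?thesis unfolding orbit_def by blast
qed

lemma funpow_add_apply: "(f ^^ (m + n)) x = (f ^^ m) ((f ^^ n) x)"
  by (simp add: funpow_add)

lemma orbit_same:
  assumes "(f ^^ k) x = x" "k \<ge> 1" "y \<in> orbit f x"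
  shows "orbit f y = orbit f x"
proof -
  obtain j where y: "y = (f ^^ j) x" using assms(3) unfolding orbit_def by auto
  have kj: "(f ^^ (k * m)) x = x" for m
  proof (induction m)
    case 0 then show ?case by simp
  next
    case (Suc m)
    have "k * Suc m = k + k * m" by simp
    hence "(f ^^ (k * Suc m)) x = (f ^^ k) ((f ^^ (k * m)) x)" using funpow_add_apply by metis
    then show ?case using Suc assms(1) by simp
  qed
  show ?thesis unfolding orbit_def
  proof (intro equalityI subsetI)
    fix z assume "z \<in> {(f ^^ n) y |n. True}"
    then obtain n where "z = (f ^^ n) y" by auto
    hence "z = (f ^^ (n + j)) x" using y funpow_add_apply by metis
    thus "z \<in> {(f ^^ n) x |n. True}" by blast
  next
    fix z assume "z \<in> {(f ^^ n) x |n. True}"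
    then obtain n where z: "z = (f ^^ n) x" by auto
    have "k * j \<ge> j" using assms(2) by simp
    have e: "n + k * j - j + j = n + k * j" using \<open>k * j \<ge> j\<close> by linarith
    have "(f ^^ (n + k * j - j)) y = (f ^^ (n + k * j - j + j)) x" using y funpow_add_apply by metis
    also have "\<dots> = (f ^^ (n + k * j)) x" using e by simp
    also have "\<dots> = (f ^^ n) ((f ^^ (k * j)) x)" using funpow_add_apply by metis
    also have "\<dots> = z" using z kj by simp
    finally have "(f ^^ (n + k * j - j)) y = z" .
    thus "z \<in> {(f ^^ n) y |n. True}" by blast
  qed
qed

lemma orbit_sub:
  assumes "f ` {0..1} \<subseteq> {0..1}" "x \<in> {0..1}"
  shows "orbit f x \<subseteq> {0..1}"
proof
  fix y assume "y \<in> orbit f x"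
  then obtain n where y: "y = (f ^^ n) x" unfolding orbit_def by auto
  have "(f ^^ n) x \<in> {0..1}"
  proof (induction n)
    case 0 then show ?case using assms(2) by simp
  next
    case (Suc n)
    hence "f ((f ^^ n) x) \<in> f ` {0..1}" by (rule imageI)
    with assms(1) show ?case by auto
  qed
  thus "y \<in> {0..1}" using y by simp
qed

lemma no_fixed:
  assumes "least_period f x k" "k \<ge> 2" "y \<in> orbit f x"
  shows "f y \<noteq> y"
proof
  assume fy: "f y = y"
  have fk: "(f ^^ k) x = x" "k \<ge> 1" using assms(1) unfolding least_period_def by auto
  have "orbit f y = {y}" unfolding orbit_def
  proof -
    have "\<And>n. (f ^^ n) y = y" proof - fix n show "(f ^^ n) y = y" by (induction n) (simp_all add: fy) qed
    thus "{(f ^^ n) y |n. True} = {y}" by auto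
  qed
  with orbit_same[OF fk assms(3)] have "orbit f x = {y}" by simp
  hence "x = y" "f x \<in> {y}" using orbit_nonempty[of x f] orbit_f[OF orbit_nonempty[of x f]] by auto
  hence "(f ^^ 1) x = x" by simp
  with assms(1,2) show False unfolding least_period_def by auto
qed

lemma key:
  fixes f :: "real \<Rightarrow> real"
  assumes f01: "f ` {0..1} \<subseteq> {0..1}"
    and mo: "mono_on {0..1/2} f"
    and am: "antimono_on {1/2..1} f"
    and x01: "x \<in> {0..1}" and lp: "least_period f x k" and k2: "k \<ge> 2"
  shows "f (Max (orbit f x)) = Min (orbit f x)" "Max (orbit f x) > 1/2"
    "finite (orbit f x)" "orbit f x \<noteq> {}"
proof -
  let ?P = "orbit f x"
  have fk: "(f ^^ k) x = x" "k \<ge> 1" using lp unfolding least_period_def by auto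
  have fin: "finite ?P" using orbit_finite(2)[OF fk] .
  have ne: "?P \<noteq> {}" using orbit_nonempty by auto
  have sub: "?P \<subseteq> {0..1}" using orbit_sub[OF f01 x01] .
  define M where "M = Max ?P"
  define m where "m = Min ?P"
  have MP: "M \<in> ?P" and mP: "m \<in> ?P" using fin ne M_def m_def by auto
  have mle: "\<And>y. y \<in> ?P \<Longrightarrow> m \<le> y" and leM: "\<And>y. y \<in> ?P \<Longrightarrow> y \<le> M"
    using fin m_def M_def by auto
  obtain z where zP: "z \<in> ?P" and fz: "f z = m" using orbit_pre[OF fk mP] by auto
  have fmP: "f m \<in> ?P" "f M \<in> ?P" using orbit_f mP MP by auto
  have fmne: "f m \<noteq> m" using no_fixed[OF lp k2 mP] .
  have fmgt: "f m > m" using mle[OF fmP(1)] fmne by simp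
  have low: "\<And>y. y \<in> ?P \<Longrightarrow> y \<le> 1/2 \<Longrightarrow> f m \<le> f y"
  proof -
    fix y assume "y \<in> ?P" "y \<le> 1/2"
    moreover have "m \<ge> 0" using sub mP by auto
    moreover have "m \<le> y" using mle \<open>y \<in> ?P\<close> by simp
    ultimately show "f m \<le> f y" using mo[unfolded monotone_on_def, rule_format, of m y] by simp
  qed
  have high: "\<And>y. y \<in> ?P \<Longrightarrow> y \<ge> 1/2 \<Longrightarrow> f M \<le> f y"
  proof -
    fix y assume "y \<in> ?P" "y \<ge> 1/2"
    moreover have "M \<le> 1" using sub MP by auto
    moreover have "y \<le> M" using leM \<open>y \<in> ?P\<close> by simp
    ultimately show "f M \<le> f y" using am[unfolded monotone_on_def, rule_format, of y M] by simp
  qed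
  have "\<not> z \<le> 1/2"
  proof
    assume "z \<le> 1/2"
    hence "f m \<le> f z" by (rule low[OF zP])
    with fz fmgt show False by simp
  qed
  hence zhigh: "z > 1/2" by simp
  hence "f M \<le> f z" using high[OF zP] by simp
  hence "f M \<le> m" using fz by simp
  thus "f (Max ?P) = Min ?P" using mle[OF fmP(2)] M_def m_def by simp
  show "Max ?P > 1/2" using zhigh leM[OF zP] M_def by simp
  show "finite ?P" "?P \<noteq> {}" using fin ne by auto
qed

theorem proposition1:
  fixes f :: "real \<Rightarrow> real"
  assumes "continuous_on {0..1} f"
    and "f ` {0..1} \<subseteq> {0..1}"
    and "mono_on {0..1/2} f"
    and "antimono_on {1/2..1} f"
    and "\<exists>P k. k \<ge> 2 \<and> periodic_orbit f P k"
  shows "\<forall>P Q k l. periodic_orbit f P k \<and> k \<ge> 2 \<and> periodic_orbit f Q l \<and> l \<ge> 2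
           \<and> Max P < Max Q \<longrightarrow> {Min P..Max P} \<subset> {Min Q..Max Q}"
proof (intro allI impI)
  fix P Q k l
  assume H: "periodic_orbit f P k \<and> k \<ge> 2 \<and> periodic_orbit f Q l \<and> l \<ge> 2 \<and> Max P < Max Q"
  then obtain x y where x: "x \<in> {0..1}" "least_period f x k" "P = orbit f x"
    and y: "y \<in> {0..1}" "least_period f y l" "Q = orbit f y"
    and k2: "k \<ge> 2" and l2: "l \<ge> 2" and MM: "Max P < Max Q"
    unfolding periodic_orbit_def by auto
  note kP = key[OF assms(2-4) x(1,2) k2, folded x(3)]
  note kQ = key[OF assms(2-4) y(1,2) l2, folded y(3)]
  have fkx: "(f ^^ k) x = x" "k \<ge> 1" using x(2) unfolding least_period_def by auto
  have fly: "(f ^^ l) y = y" "l \<ge> 1" using y(2) unfolding least_period_def by auto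
  have Q1: "Max Q \<le> 1" using orbit_sub[OF assms(2) y(1)] kQ(3,4) y(3) by auto
  have "f (Max Q) \<le> f (Max P)" using assms(4) kP(2) MM Q1 unfolding monotone_on_def by auto
  hence le: "Min Q \<le> Min P" using kP(1) kQ(1) by simp
  have ne: "Min Q \<noteq> Min P"
  proof
    assume eq: "Min Q = Min P"
    have "Min P \<in> P" "Min Q \<in> Q" using kP(3,4) kQ(3,4) by auto
    hence "orbit f (Min P) = P" "orbit f (Min P) = Q"
      using orbit_same[OF fkx, of "Min P"] orbit_same[OF fly, of "Min P"] x(3) y(3) eq by auto
    thus False using MM by simp
  qed
  have "Min P \<le> Max P" using kP(3,4) by simp
  have s1: "{Min P..Max P} \<subseteq> {Min Q..Max Q}" using le MM by simp
  have "Min Q \<in> {Min Q..Max Q}" "Min Q \<notin> {Min P..Max P}" using le ne MM \<open>Min P \<le> Max P\<close> by simp_all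
  thus "{Min P..Max P} \<subset> {Min Q..Max Q}" using s1 by blast
qed

end
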